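(* For every pair of integers $a,b$ with $2\leq a\leq b$, there exists a connected graph $G$ of some order $n\ge 3$ such that $px_k(G)=a$ and $rx_k(G)=b$ for each integer $k$ with $3\leq k\leq n$.
   Context: All graphs are finite, simple, undirected and connected. An edge-coloring of a graph assigns a color to each edge (adjacent edges may receive the same color). A tree in an edge-colored graph is proper if any two adjacent edges of the tree receive different colors, and rainbow if no two of its edges receive the same color. For $S\subseteq V(G)$, an $S$-tree is a subgraph of $G$ that is a tree containing all vertices of $S$. For a connected graph $G$ of order $n$ and an integer $k$ with $2\le k\le n$, an edge-coloring of $G$ is a $k$-proper coloring (resp. $k$-rainbow coloring) if for every set $S$ of $k$ vertices of $G$ there exists a proper (resp. rainbow) $S$-tree in $G$. The $k$-proper index $px_k(G)$ (resp. $k$-rainbow index $rx_k(G)$) is the minimum number of colors used in a $k$-proper coloring (resp. $k$-rainbow coloring) of $G$. *)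

theory Defs
  imports Main
begin

definition simple_graph :: "'a set \<Rightarrow> 'a set set \<Rightarrow> bool" where
  "simple_graph V E \<longleftrightarrow> finite V \<and>
     (\<forall>e\<in>E. \<exists>u v. u \<noteq> v \<and> u \<in> V \<and> v \<in> V \<and> e = {u, v})"

definition adj_rel :: "'a set set \<Rightarrow> ('a \<times> 'a) set" where
  "adj_rel E = {(x, y). {x, y} \<in> E \<and> x \<noteq> y}"

definition graph_connected :: "'a set \<Rightarrow> 'a set set \<Rightarrow> bool" where
  "graph_connected V E \<longleftrightarrow> (\<forall>u\<in>V. \<forall>v\<in>V. (u, v) \<in> (adj_rel E)\<^sup>*)"

definition is_cycle :: "'a set set \<Rightarrow> 'a list \<Rightarrow> bool" where
  "is_cycle E vs \<longleftrightarrow> length vs \<ge> 3 \<and> distinct vs \<and>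
     (\<forall>i < length vs. {vs ! i, vs ! ((i + 1) mod length vs)} \<in> E)"

definition acyclic_graph :: "'a set set \<Rightarrow> bool" where
  "acyclic_graph E \<longleftrightarrow> \<not> (\<exists>vs. is_cycle E vs)"

definition is_subtree :: "'a set \<Rightarrow> 'a set set \<Rightarrow> 'a set \<Rightarrow> 'a set set \<Rightarrow> bool" where
  "is_subtree V E VT ET \<longleftrightarrow> VT \<subseteq> V \<and> ET \<subseteq> E \<and> VT \<noteq> {} \<and>
     (\<forall>e\<in>ET. e \<subseteq> VT) \<and> graph_connected VT ET \<and> acyclic_graph ET"

definition proper_tree :: "('a set \<Rightarrow> nat) \<Rightarrow> 'a set set \<Rightarrow> bool" where
  "proper_tree c ET \<longleftrightarrow> (\<forall>e\<in>ET. \<forall>f\<in>ET. e \<noteq> f \<and> e \<inter> f \<noteq> {} \<longrightarrow> c e \<noteq> c f)"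

definition rainbow_tree :: "('a set \<Rightarrow> nat) \<Rightarrow> 'a set set \<Rightarrow> bool" where
  "rainbow_tree c ET \<longleftrightarrow> inj_on c ET"

definition k_proper_coloring :: "nat \<Rightarrow> 'a set \<Rightarrow> 'a set set \<Rightarrow> ('a set \<Rightarrow> nat) \<Rightarrow> bool" where
  "k_proper_coloring k V E c \<longleftrightarrow>
     (\<forall>S. S \<subseteq> V \<and> card S = k \<longrightarrow>
        (\<exists>VT ET. is_subtree V E VT ET \<and> S \<subseteq> VT \<and> proper_tree c ET))"

definition k_rainbow_coloring :: "nat \<Rightarrow> 'a set \<Rightarrow> 'a set set \<Rightarrow> ('a set \<Rightarrow> nat) \<Rightarrow> bool" where
  "k_rainbow_coloring k V E c \<longleftrightarrow>
     (\<forall>S. S \<subseteq> V \<and> card S = k \<longrightarrow>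
        (\<exists>VT ET. is_subtree V E VT ET \<and> S \<subseteq> VT \<and> rainbow_tree c ET))"

definition proper_index :: "nat \<Rightarrow> 'a set \<Rightarrow> 'a set set \<Rightarrow> nat" where
  "proper_index k V E = (LEAST m. \<exists>c. k_proper_coloring k V E c \<and> card (c ` E) = m)"

definition rainbow_index :: "nat \<Rightarrow> 'a set \<Rightarrow> 'a set set \<Rightarrow> nat" where
  "rainbow_index k V E = (LEAST m. \<exists>c. k_rainbow_coloring k V E c \<and> card (c ` E) = m)"

end

theory Submission imports Defs begin

definition par :: "nat \<Rightarrow> nat \<Rightarrow> nat" where
  "par a j = (if j \<le> a then 0 else j - 1)"

definition spE :: "nat \<Rightarrow> nat \<Rightarrow> nat set set" where
  "spE a b = (\<lambda>j. {par a j, j}) ` {1..b}"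

lemma par_less: "1 \<le> j \<Longrightarrow> par a j < j"
  by (simp add: par_def)

lemma cut_lemma:
  assumes "(x,y) \<in> (adj_rel ET)\<^sup>*" "x \<in> A" "y \<notin> A"
  shows "\<exists>u v. {u,v} \<in> ET \<and> u \<in> A \<and> v \<notin> A"
  using assms
proof (induction rule: rtrancl_induct)
  case base then show ?case by simp
next
  case (step y z)
  show ?case
  proof (cases "y \<in> A")
    case True
    then show ?thesis using step by (auto simp: adj_rel_def)
  next
    case False
    then show ?thesis using step by blast
  qed
qed

lemma exists_S:
  assumes "finite V" "T \<subseteq> V" "card T \<le> k" "k \<le> card V"
  shows "\<exists>S. T \<subseteq> S \<and> S \<subseteq> V \<and> card S = k"
proof -
  have "k - card T \<le> card (V - T)"
    using assms by (simp add: card_Diff_subset finite_subset)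
  then obtain R where R: "R \<subseteq> V - T" "card R = k - card T" "finite R"
    by (rule obtain_subset_with_card_n)
  have fT: "finite T" using assms finite_subset by blast
  have "card (T \<union> R) = card T + card R"
    using R fT by (intro card_Un_disjoint) auto
  then show ?thesis using R assms by (intro exI[of _ "T \<union> R"]) auto
qed

lemma adj_par:
  assumes "{x,y} \<in> spE a b" "x < y"
  shows "x = par a y"
proof -
  obtain i where i: "1 \<le> i" "i \<le> b" "{x,y} = {par a i, i}" using assms(1) by (auto simp: spE_def)
  have "par a i < i" using i par_less by blast
  then show ?thesis using i assms(2) by (auto simp: doubleton_eq_iff)
qed

lemma max_edge: "1 \<le> j \<Longrightarrow> Max {par a j, j} = j"
  using par_less[of j a] by (simp add: max_def)

lemma max_par: "1 \<le> j \<Longrightarrow> max (par a j) j = j"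
  using par_less[of j a] by simp

lemma acyclic_sp: "acyclic_graph (spE a b)"
  unfolding acyclic_graph_def
proof
  assume "\<exists>vs. is_cycle (spE a b) vs"
  then obtain vs where c: "is_cycle (spE a b) vs" by blast
  define n where "n = length vs"
  have n3: "n \<ge> 3" and dist: "distinct vs"
    and ed: "\<And>i. i < n \<Longrightarrow> {vs ! i, vs ! ((i + 1) mod n)} \<in> spE a b"
    using c by (auto simp: is_cycle_def n_def)
  define m where "m = Max (set vs)"
  have "m \<in> set vs" unfolding m_def using n3 n_def by (intro Max_in) auto
  then obtain p where p: "p < n" "vs ! p = m" by (auto simp: in_set_conv_nth n_def)
  define q0 where "q0 = (if p = 0 then n - 1 else p - 1)"
  define q1 where "q1 = (if p = n - 1 then 0 else p + 1)"
  have q0n: "q0 < n" "(q0 + 1) mod n = p" using p n3 by (auto simp: q0_def)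
  have q1n: "q1 < n" "(p + 1) mod n = q1" using p n3 by (auto simp: q1_def)
  have neq: "q0 \<noteq> q1" "q0 \<noteq> p" "q1 \<noteq> p" using p n3 by (auto simp: q0_def q1_def)
  have v0: "vs ! q0 \<noteq> m" "vs ! q1 \<noteq> m" "vs ! q0 \<noteq> vs ! q1"
    using neq dist p q0n q1n by (auto simp: nth_eq_iff_index_eq n_def)
  have le: "vs ! q0 \<le> m" "vs ! q1 \<le> m"
    using q0n q1n unfolding m_def n_def by (auto intro: Max_ge)
  have e0: "{vs ! q0, m} \<in> spE a b" using ed[OF q0n(1)] q0n p by simp
  have e1: "{vs ! q1, m} \<in> spE a b" using ed[OF p(1)] q1n p by (simp add: insert_commute)
  have "vs ! q0 = par a m" using adj_par[OF e0] v0 le by simp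
  moreover have "vs ! q1 = par a m" using adj_par[OF e1] v0 le by simp
  ultimately show False using v0 by simp
qed


lemma tree_has_edge:
  assumes st: "is_subtree V (spE a b) VT ET" and a2: "2 \<le> a"
    and j: "0 \<in> VT" "j \<in> VT" "1 \<le> j" "j \<le> b"
  shows "{par a j, j} \<in> ET"
proof -
  have conn: "graph_connected VT ET" and sub: "ET \<subseteq> spE a b"
    using st by (auto simp: is_subtree_def)
  have "(j, 0) \<in> (adj_rel ET)\<^sup>*" using conn j unfolding graph_connected_def by blast
  define D where "D = (if j < a then {j} else {j..b})"
  have "j \<in> D" "0 \<notin> D" using j by (auto simp: D_def)
  then obtain u v where uv: "{u,v} \<in> ET" "u \<in> D" "v \<notin> D"
    using cut_lemma[OF \<open>(j, 0) \<in> _\<close>] by blast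
  obtain i where i: "1 \<le> i" "i \<le> b" "{u,v} = {par a i, i}"
  proof -
    have "{u,v} \<in> spE a b" using sub uv by blast
    then show ?thesis using that unfolding spE_def by (auto simp del: One_nat_def)
  qed
  have "i = j"
  proof (cases "u = par a i \<and> v = i")
    case True
    then show ?thesis using uv i j by (auto simp: D_def par_def split: if_splits)
  next
    case False
    then have "u = i" "v = par a i" using i(3) by (auto simp: doubleton_eq_iff)
    then show ?thesis using uv i j by (auto simp: D_def par_def split: if_splits)
  qed
  then show ?thesis using uv i by simp
qed

lemma simple_sp: "simple_graph {0..b} (spE a b)"
  unfolding simple_graph_def spE_def
proof (intro conjI ballI)
  fix e assume "e \<in> (\<lambda>j. {par a j, j}) ` {1..b}"
  then obtain j where j: "1 \<le> j" "j \<le> b" "e = {par a j, j}" by auto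
  then show "\<exists>u v. u \<noteq> v \<and> u \<in> {0..b} \<and> v \<in> {0..b} \<and> e = {u, v}"
    using par_less[of j a] by (intro exI[of _ "par a j"] exI[of _ j]) auto
qed simp

lemma conn0: "j \<le> b \<Longrightarrow> (j, 0) \<in> (adj_rel (spE a b))\<^sup>*"
proof (induction j rule: less_induct)
  case (less j)
  show ?case
  proof (cases "j = 0")
    case True then show ?thesis by simp
  next
    case False
    then have "(j, par a j) \<in> adj_rel (spE a b)"
      using less.prems par_less[of j a] by (auto simp: adj_rel_def spE_def insert_commute)
    moreover have "(par a j, 0) \<in> (adj_rel (spE a b))\<^sup>*"
      using less par_less[of j a] False by simp
    ultimately show ?thesis by (rule converse_rtrancl_into_rtrancl)
  qed
qed

lemma conn_sp: "graph_connected {0..b} (spE a b)"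
proof -
  have s: "sym ((adj_rel (spE a b))\<^sup>*)"
    by (intro sym_rtrancl) (auto simp: sym_def adj_rel_def insert_commute)
  show ?thesis unfolding graph_connected_def
  proof (intro ballI)
    fix u v assume "u \<in> {0..b::nat}" "v \<in> {0..b}"
    then have "(u,0) \<in> (adj_rel (spE a b))\<^sup>*" "(v,0) \<in> (adj_rel (spE a b))\<^sup>*"
      using conn0 by auto
    then show "(u, v) \<in> (adj_rel (spE a b))\<^sup>*" using s
      by (meson rtrancl_trans symD)
  qed
qed

lemma subtree_sp: "is_subtree {0..b} (spE a b) {0..b} (spE a b)"
  using simple_sp[of b a] conn_sp acyclic_sp
  unfolding is_subtree_def simple_graph_def by auto

lemma card_E: "card (spE a b) = b"
proof -
  have "inj_on (\<lambda>j. {par a j, j}) {1..b}"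
    by (intro inj_onI) (metis atLeastAtMost_iff max_edge)
  then show ?thesis unfolding spE_def by (simp add: card_image)
qed


lemma two_edges:
  assumes a2: "2 \<le> a" and k: "3 \<le> k" "k \<le> Suc b"
    and ij: "1 \<le> i" "i \<le> b" "1 \<le> j" "j \<le> b" "i \<noteq> j"
    and P: "\<forall>S. S \<subseteq> {0..b} \<and> card S = k \<longrightarrow>
        (\<exists>VT ET. is_subtree {0..b} (spE a b) VT ET \<and> S \<subseteq> VT \<and> Q ET)"
  shows "\<exists>ET. {par a i, i} \<in> ET \<and> {par a j, j} \<in> ET \<and> Q ET"
proof -
  have "card {0,i,j} = 3" using ij by auto
  then obtain S where S: "{0,i,j} \<subseteq> S" "S \<subseteq> {0..b}" "card S = k"
    using exists_S[of "{0..b}" "{0,i,j}" k] k ij by auto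
  then obtain VT ET where T: "is_subtree {0..b} (spE a b) VT ET" "S \<subseteq> VT" "Q ET"
    using P by blast
  have "{par a i, i} \<in> ET" using tree_has_edge[OF T(1) a2] S T ij by auto
  moreover have "{par a j, j} \<in> ET" using tree_has_edge[OF T(1) a2] S T ij by auto
  ultimately show ?thesis using T by blast
qed

definition col :: "nat \<Rightarrow> nat \<Rightarrow> nat" where
  "col a j = (if j \<le> a then j else if (j - a) mod 2 = 1 then 1 else a)"

lemma col_adj:
  assumes "2 \<le> a" "a \<le> j" shows "col a (Suc j) \<noteq> col a j"
proof (cases "j = a")
  case True then show ?thesis using assms by (simp add: col_def)
next
  case False
  then have "a < j" using assms by simp
  then have eq: "Suc j - a = Suc (j - a)" by simp
  have "(Suc (j - a)) mod 2 = 1 \<longleftrightarrow> (j - a) mod 2 = 0" by presburger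
  then show ?thesis using \<open>a < j\<close> assms eq unfolding col_def by auto
qed

lemma col_ne:
  assumes "2 \<le> a" "1 \<le> i" "1 \<le> j" "i \<noteq> j"
    "par a i = par a j \<or> par a i = j \<or> i = par a j"
  shows "col a i \<noteq> col a j"
proof (cases "i \<le> a \<and> j \<le> a")
  case True then show ?thesis using assms by (simp add: col_def)
next
  case False
  have "(i = Suc j \<and> a \<le> j) \<or> (j = Suc i \<and> a \<le> i)"
    using False assms unfolding par_def by (auto split: if_splits)
  then show ?thesis using col_adj[OF assms(1)] by metis
qed

lemma col_image: "2 \<le> a \<Longrightarrow> a \<le> b \<Longrightarrow> col a ` {1..b} = {1..a}"
proof
  assume "2 \<le> a" "a \<le> b"
  show "col a ` {1..b} \<subseteq> {1..a}" using \<open>2 \<le> a\<close> by (auto simp: col_def)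
  show "{1..a} \<subseteq> col a ` {1..b}"
  proof
    fix x assume "x \<in> {1..a}"
    then have "col a x = x" "x \<in> {1..b}" using \<open>a \<le> b\<close> by (auto simp: col_def)
    then show "x \<in> col a ` {1..b}" by (metis image_eqI)
  qed
qed


lemma cE_image: "(\<lambda>e. f (Max e)) ` spE a b = f ` {1..b}"
proof -
  have "(\<lambda>e. f (Max e)) ` spE a b = (\<lambda>j. f (Max {par a j, j})) ` {1..b}"
    unfolding spE_def by (simp add: image_image)
  also have "\<dots> = f ` {1..b}" by (intro image_cong) (auto simp: max_edge max_par)
  finally show ?thesis .
qed

lemma proper_up:
  assumes "2 \<le> a" "a \<le> b"
  shows "k_proper_coloring k {0..b} (spE a b) (\<lambda>e. col a (Max e))
         \<and> card ((\<lambda>e. col a (Max e)) ` spE a b) = a"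
proof
  have "proper_tree (\<lambda>e. col a (Max e)) (spE a b)"
    unfolding proper_tree_def
  proof (intro ballI impI)
    fix e f assume ef: "e \<in> spE a b" "f \<in> spE a b" "e \<noteq> f \<and> e \<inter> f \<noteq> {}"
    obtain i where i: "1 \<le> i" "i \<le> b" "e = {par a i, i}" using ef(1) unfolding spE_def by (auto simp del: One_nat_def)
    obtain j where j: "1 \<le> j" "j \<le> b" "f = {par a j, j}" using ef(2) unfolding spE_def by (auto simp del: One_nat_def)
    have "i \<noteq> j" using ef i j by auto
    moreover have "par a i = par a j \<or> par a i = j \<or> i = par a j" using ef i j by auto
    ultimately have "col a i \<noteq> col a j" using col_ne assms i j by blast
    then show "col a (Max e) \<noteq> col a (Max f)" using i j by (simp add: max_edge max_par)
  qed
  then show "k_proper_coloring k {0..b} (spE a b) (\<lambda>e. col a (Max e))"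
    unfolding k_proper_coloring_def using subtree_sp by blast
  show "card ((\<lambda>e. col a (Max e)) ` spE a b) = a"
    using cE_image[of "col a"] col_image[OF assms] by simp
qed

lemma proper_low:
  assumes a: "2 \<le> a" "a \<le> b" and k: "3 \<le> k" "k \<le> Suc b"
    and c: "k_proper_coloring k {0..b} (spE a b) c"
  shows "a \<le> card (c ` spE a b)"
proof -
  let ?F = "(\<lambda>j. {par a j, j}) ` {1..a}"
  have inj: "inj_on c ?F"
  proof (intro inj_onI)
    fix e f assume "e \<in> ?F" "f \<in> ?F" and eq: "c e = c f"
    then obtain i j where ij: "1 \<le> i" "i \<le> a" "e = {par a i, i}" "1 \<le> j" "j \<le> a" "f = {par a j, j}"
      by auto
    show "e = f"
    proof (rule ccontr)
      assume "e \<noteq> f"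
      then have "i \<noteq> j" using ij by auto
      have ib: "i \<le> b" "j \<le> b" using ij a by auto
      obtain ET where ET: "{par a i, i} \<in> ET" "{par a j, j} \<in> ET" "proper_tree c ET"
        using two_edges[OF a(1) k(1) k(2) ij(1) ib(1) ij(4) ib(2) \<open>i \<noteq> j\<close>
           c[unfolded k_proper_coloring_def]] by blast
      have "par a i = 0" "par a j = 0" using ij by (auto simp: par_def)
      then have "0 \<in> e \<inter> f" using ij by simp
      then have "e \<inter> f \<noteq> {}" by blast
      have ef: "e \<in> ET" "f \<in> ET" using ET ij by simp_all
      have "c e \<noteq> c f"
        using ET(3)[unfolded proper_tree_def, rule_format, OF ef] \<open>e \<noteq> f\<close> \<open>e \<inter> f \<noteq> {}\<close>
        by blast
      then show False using eq by simp
    qed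
  qed
  have "inj_on (\<lambda>j. {par a j, j}) {1..a}"
    by (intro inj_onI) (metis atLeastAtMost_iff max_edge)
  then have "card ?F = a" by (simp add: card_image)
  then have "card (c ` ?F) = a" using inj by (simp add: card_image)
  moreover have "c ` ?F \<subseteq> c ` spE a b" using a unfolding spE_def by (intro image_mono) auto
  moreover have "finite (c ` spE a b)" unfolding spE_def by simp
  ultimately show ?thesis using card_mono[of "c ` spE a b" "c ` ?F"] by simp
qed

lemma rainbow_up:
  shows "k_rainbow_coloring k {0..b} (spE a b) Max \<and> card (Max ` spE a b) = b"
proof
  have inj: "inj_on Max (spE a b)"
    by (intro inj_onI) (auto simp: spE_def max_edge max_par)
  then show "k_rainbow_coloring k {0..b} (spE a b) Max"
    unfolding k_rainbow_coloring_def rainbow_tree_def using subtree_sp by blast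
  show "card (Max ` spE a b) = b" using inj card_E by (simp add: card_image)
qed

lemma rainbow_low:
  assumes a: "2 \<le> a" "a \<le> b" and k: "3 \<le> k" "k \<le> Suc b"
    and c: "k_rainbow_coloring k {0..b} (spE a b) c"
  shows "b \<le> card (c ` spE a b)"
proof -
  have inj: "inj_on c (spE a b)"
  proof (intro inj_onI)
    fix e f assume "e \<in> spE a b" "f \<in> spE a b" and eq: "c e = c f"
    then obtain i j where ij: "1 \<le> i" "i \<le> b" "e = {par a i, i}" "1 \<le> j" "j \<le> b" "f = {par a j, j}"
      unfolding spE_def by (auto simp del: One_nat_def)
    show "e = f"
    proof (rule ccontr)
      assume "e \<noteq> f"
      then have "i \<noteq> j" using ij by auto
      obtain ET where ET: "{par a i, i} \<in> ET" "{par a j, j} \<in> ET" "rainbow_tree c ET"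
        using two_edges[OF a(1) k(1) k(2) ij(1) ij(2) ij(4) ij(5) \<open>i \<noteq> j\<close>
           c[unfolded k_rainbow_coloring_def]] by blast
      have ef: "e \<in> ET" "f \<in> ET" using ET ij by simp_all
      have "e = f" using inj_onD[OF ET(3)[unfolded rainbow_tree_def] eq ef] .
      then show False using \<open>e \<noteq> f\<close> by simp
    qed
  qed
  then show ?thesis using card_E by (simp add: card_image)
qed

theorem mainTheorem14:
  fixes a b :: nat
  assumes "2 \<le> a" and "a \<le> b"
  shows "\<exists>(V :: nat set) E. simple_graph V E \<and> graph_connected V E \<and> card V \<ge> 3 \<and>
           (\<forall>k. 3 \<le> k \<and> k \<le> card V \<longrightarrow>
                proper_index k V E = a \<and> rainbow_index k V E = b)"
proof (intro exI conjI allI impI)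
  show "simple_graph {0..b} (spE a b)" by (rule simple_sp)
  show "graph_connected {0..b} (spE a b)" by (rule conn_sp)
  show "3 \<le> card {0..b}" using assms by simp
  fix k assume k: "3 \<le> k \<and> k \<le> card {0..b}"
  then have k': "3 \<le> k" "k \<le> Suc b" by auto
  show "proper_index k {0..b} (spE a b) = a"
    unfolding proper_index_def
  proof (rule Least_equality)
    show "\<exists>c. k_proper_coloring k {0..b} (spE a b) c \<and> card (c ` spE a b) = a"
      using proper_up[OF assms] by blast
  next
    fix m assume "\<exists>c. k_proper_coloring k {0..b} (spE a b) c \<and> card (c ` spE a b) = m"
    then show "a \<le> m" using proper_low[OF assms k'] by blast
  qed
  show "rainbow_index k {0..b} (spE a b) = b"
    unfolding rainbow_index_def
  proof (rule Least_equality)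
    show "\<exists>c. k_rainbow_coloring k {0..b} (spE a b) c \<and> card (c ` spE a b) = b"
      using rainbow_up by blast
  next
    fix m assume "\<exists>c. k_rainbow_coloring k {0..b} (spE a b) c \<and> card (c ` spE a b) = m"
    then show "b \<le> m" using rainbow_low[OF assms k'] by blast
  qed
qed

end
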